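(* Let $f:\mathbb{R}^n\to\mathbb{R}$ be differentiable and pseudo-convex, with $\nabla f$ $L$-Lipschitz continuous, and assume the stationary set $X^*$ is non-empty. Then the sequence $\{x^k\}$ generated by Algorithm 2 (with $\nabla f(x^k)\ne0$ for all $k$) satisfies, for every $x^*\in X^*$ and every integer $K\ge1$, $$\frac1K\sum_{k=0}^{K-1}\|\nabla f(x^k)\|^2\le\frac{\|x^0-x^*\|^2}{K\kappa_2h_{\min}^2},$$ where $\kappa_2=2\beta-1-\beta^2\nu^2$ and $h_{\min}=\min\left\{\underline{h},\frac{\nu\theta}{\overline{h}\max\{L,1\}^2}\right\}$.
   Context: Pseudo-convex: $\nabla f$ pseudo-monotone, i.e. $\langle \nabla f(x),y-x\rangle\ge0\Rightarrow\langle\nabla f(y),y-x\rangle\ge0$ for all $x,y$. $X^*=\{x:\nabla f(x)=0\}$. Algorithm 2: parameters $0<\mu<\nu<1$, $0<\underline{h}<1\le\gamma_0^0\le\overline{h}$, $\theta\in(0,1)$, $\tau>1$, $\beta\in\left(\frac{1-\sqrt{1-\nu^2}}{\nu^2},1\right]$, starting point $x^0$. At iteration $k$: for $\gamma>0$ let $z^k(\gamma)=x^k-\gamma\nabla f(x^k)$ and $r_k(\gamma)=\gamma\|\nabla f(z^k(\gamma))-\nabla f(x^k)\|/\|z^k(\gamma)-x^k\|$; starting from $\gamma_0^k$, while $r_k(\gamma_l^k)>\nu$ set $\gamma_{l+1}^k=\gamma_l^k\theta\min\{1,1/r_k(\gamma_l^k)\}$; let $h_k$ be the first $\gamma_l^k$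 with $r_k(\gamma_l^k)\le\nu$. Then $z^k=x^k-h_k\nabla f(x^k)$, $x^{k+1}=x^k-h_k\big(\nabla f(x^k)-\beta(\nabla f(x^k)-\nabla f(z^k))\big)$, and $\gamma_0^{k+1}=\mathbf{P}_{[\underline{h},\overline{h}]}(\tau h_k)$ if $r_k(h_k)\le\mu$, else $\gamma_0^{k+1}=\mathbf{P}_{[\underline{h},\overline{h}]}(h_k)$, where $\mathbf{P}_{[a,b]}$ is projection onto $[a,b]$. *)

theory Defs
  imports "HOL-Analysis.Analysis"
begin

text \<open>Pseudo-convexity via pseudo-monotonicity of the gradient g.\<close>
definition pseudo_monotone :: "('a::real_inner \<Rightarrow> 'a) \<Rightarrow> bool" where
  "pseudo_monotone g \<longleftrightarrow>
     (\<forall>x y. g x \<bullet> (y - x) \<ge> 0 \<longrightarrow> g y \<bullet> (y - x) \<ge> 0)"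

definition proj_interval :: "real \<Rightarrow> real \<Rightarrow> real \<Rightarrow> real" where
  "proj_interval a b t = max a (min b t)"

definition ztrial :: "('a::real_normed_vector \<Rightarrow> 'a) \<Rightarrow> 'a \<Rightarrow> real \<Rightarrow> 'a" where
  "ztrial g x \<gamma> = x - \<gamma> *\<^sub>R g x"

definition rratio :: "('a::real_normed_vector \<Rightarrow> 'a) \<Rightarrow> 'a \<Rightarrow> real \<Rightarrow> real" where
  "rratio g x \<gamma> = \<gamma> * norm (g (ztrial g x \<gamma>) - g x) / norm (ztrial g x \<gamma> - x)"

text \<open>Backtracking trial steps gamma_l starting from gamma_0 (the update rule;
  only the values up to the first one with r \<le> nu matter).\<close>
primrec btrack :: "('a::real_normed_vector \<Rightarrow> 'a) \<Rightarrow> real \<Rightarrow> 'a \<Rightarrow> real \<Rightarrow> nat \<Rightarrow> real" where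
  "btrack g \<theta> x \<gamma>0 0 = \<gamma>0"
| "btrack g \<theta> x \<gamma>0 (Suc l) =
     btrack g \<theta> x \<gamma>0 l * \<theta> * min 1 (1 / rratio g x (btrack g \<theta> x \<gamma>0 l))"

definition hstep :: "('a::real_normed_vector \<Rightarrow> 'a) \<Rightarrow> real \<Rightarrow> real \<Rightarrow> 'a \<Rightarrow> real \<Rightarrow> real" where
  "hstep g \<nu> \<theta> x \<gamma>0 =
     btrack g \<theta> x \<gamma>0 (LEAST l. rratio g x (btrack g \<theta> x \<gamma>0 l) \<le> \<nu>)"

text \<open>Algorithm 2: the state at iteration k is the pair (x^k, gamma_0^k).\<close>
primrec alg2 :: "('a::real_normed_vector \<Rightarrow> 'a) \<Rightarrow> real \<Rightarrow> real \<Rightarrow> real \<Rightarrow> real \<Rightarrow> real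
    \<Rightarrow> real \<Rightarrow> real \<Rightarrow> 'a \<Rightarrow> real \<Rightarrow> nat \<Rightarrow> 'a \<times> real" where
  "alg2 g \<mu> \<nu> \<theta> \<tau> \<beta> hlo hhi x0 \<gamma>00 0 = (x0, \<gamma>00)"
| "alg2 g \<mu> \<nu> \<theta> \<tau> \<beta> hlo hhi x0 \<gamma>00 (Suc k) =
     (let (x, \<gamma>0) = alg2 g \<mu> \<nu> \<theta> \<tau> \<beta> hlo hhi x0 \<gamma>00 k;
          h = hstep g \<nu> \<theta> x \<gamma>0;
          z = x - h *\<^sub>R g x;
          x' = x - h *\<^sub>R (g x - \<beta> *\<^sub>R (g x - g z));
          \<gamma>0' = (if rratio g x h \<le> \<mu> then proj_interval hlo hhi (\<tau> * h)
                 else proj_interval hlo hhi h)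
      in (x', \<gamma>0'))"

end

theory Submission
  imports Defs
begin

lemma rratio_eq:
  fixes g :: "'a::real_normed_vector \<Rightarrow> 'a"
  assumes "g x \<noteq> 0" "\<gamma> > 0"
  shows "rratio g x \<gamma> = norm (g (ztrial g x \<gamma>) - g x) / norm (g x)"
proof -
  have "norm (ztrial g x \<gamma> - x) = \<gamma> * norm (g x)"
    using assms by (simp add: ztrial_def)
  thus ?thesis using assms by (simp add: rratio_def)
qed

lemma rratio_le:
  fixes g :: "'a::real_normed_vector \<Rightarrow> 'a"
  assumes "g x \<noteq> 0" "\<gamma> > 0" "L-lipschitz_on UNIV g"
  shows "rratio g x \<gamma> \<le> \<gamma> * L" "0 \<le> rratio g x \<gamma>"
proof -
  have "norm (g (ztrial g x \<gamma>) - g x) \<le> L * norm (ztrial g x \<gamma> - x)"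
    using lipschitz_on_normD[OF assms(3)] by auto
  also have "\<dots> = L * (\<gamma> * norm (g x))" using assms by (simp add: ztrial_def)
  finally have "norm (g (ztrial g x \<gamma>) - g x) / norm (g x) \<le> \<gamma> * L"
    using assms by (simp add: divide_le_eq mult_ac)
  thus "rratio g x \<gamma> \<le> \<gamma> * L" using rratio_eq[of g x \<gamma>] assms by simp
  show "0 \<le> rratio g x \<gamma>" using rratio_eq[of g x \<gamma>] assms by simp
qed

lemma btrack_pos:
  fixes g :: "'a::real_normed_vector \<Rightarrow> 'a"
  assumes "0 < \<theta>" "\<theta> < 1" "0 < \<nu>" "0 < \<gamma>0"
  shows "(\<forall>l'<l. rratio g x (btrack g \<theta> x \<gamma>0 l') > \<nu>) \<Longrightarrow>
     btrack g \<theta> x \<gamma>0 l > 0 \<and> btrack g \<theta> x \<gamma>0 l \<le> \<theta>^l * \<gamma>0"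
proof (induction l)
  case 0 then show ?case using assms by simp
next
  case (Suc l)
  let ?b = "btrack g \<theta> x \<gamma>0 l" let ?r = "rratio g x ?b"
  have IH: "?b > 0" "?b \<le> \<theta>^l * \<gamma>0" using Suc by auto
  have r: "?r > \<nu>" using Suc.prems by auto
  have m: "0 < min 1 (1 / ?r)" "min 1 (1 / ?r) \<le> 1" using r assms by auto
  have "?b * \<theta> * min 1 (1 / ?r) > 0" using IH m assms by simp
  moreover have "?b * \<theta> * min 1 (1 / ?r) \<le> ?b * \<theta>"
    using IH m assms by (simp add: mult_left_le)
  moreover have "?b * \<theta> \<le> \<theta>^Suc l * \<gamma>0" using IH assms by (simp add: mult_ac)
  ultimately show ?case by simp
qed

lemma hstep_props:
  fixes g :: "'a::real_normed_vector \<Rightarrow> 'a"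
  assumes gx: "g x \<noteq> 0" and lip: "L-lipschitz_on UNIV g"
    and th: "0 < \<theta>" "\<theta> < 1" and nu: "0 < \<nu>" "\<nu> < 1"
    and hlo: "0 < hlo" "hlo \<le> \<gamma>0" and hhi: "1 \<le> hhi"
  shows "hstep g \<nu> \<theta> x \<gamma>0 > 0" "rratio g x (hstep g \<nu> \<theta> x \<gamma>0) \<le> \<nu>"
    "hstep g \<nu> \<theta> x \<gamma>0 \<ge> min hlo (\<nu> * \<theta> / (hhi * (max L 1)\<^sup>2))"
proof -
  define M where "M = max L 1"
  have M: "M \<ge> 1" "L \<le> M" unfolding M_def by auto
  have L0: "L \<ge> 0" using lipschitz_on_nonneg[OF lip] .
  have g0: "\<gamma>0 > 0" using hlo by simp
  let ?b = "btrack g \<theta> x \<gamma>0"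
  have rM: "rratio g x \<gamma> \<le> \<gamma> * M" if "\<gamma> > 0" for \<gamma>
  proof -
    have "rratio g x \<gamma> \<le> \<gamma> * L" using rratio_le[OF gx that lip] by simp
    also have "\<dots> \<le> \<gamma> * M" using M that by (simp add: mult_left_mono)
    finally show ?thesis .
  qed
  have ex: "\<exists>l. rratio g x (?b l) \<le> \<nu>"
  proof (rule ccontr)
    assume "\<not> ?thesis"
    hence all: "\<forall>l. rratio g x (?b l) > \<nu>" by (meson not_le)
    obtain n where n: "\<theta>^n < \<nu> / (\<gamma>0 * M)"
      using real_arch_pow_inv[of "\<nu> / (\<gamma>0 * M)" \<theta>] nu th g0 M by auto
    have bp: "?b n > 0 \<and> ?b n \<le> \<theta>^n * \<gamma>0" using btrack_pos[OF th nu(1) g0] all by blast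
    have "rratio g x (?b n) \<le> ?b n * M" using rM bp by auto
    also have "\<dots> \<le> \<theta>^n * \<gamma>0 * M" using bp M by (simp add: mult_right_mono)
    also have "\<dots> < \<nu>" using n g0 M by (simp add: pos_less_divide_eq mult_ac)
    finally show False using all by (meson less_asym)
  qed
  define l0 where "l0 = (LEAST l. rratio g x (?b l) \<le> \<nu>)"
  have h: "hstep g \<nu> \<theta> x \<gamma>0 = ?b l0" unfolding hstep_def l0_def by simp
  have r0: "rratio g x (?b l0) \<le> \<nu>" unfolding l0_def using ex by (metis LeastI)
  have before: "\<forall>l'<l0. rratio g x (?b l') > \<nu>"
    unfolding l0_def using not_less_Least by (metis not_le)
  have bp: "?b l0 > 0" using btrack_pos[OF th nu(1) g0] before by blast
  show "hstep g \<nu> \<theta> x \<gamma>0 > 0" using h bp by simp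
  show "rratio g x (hstep g \<nu> \<theta> x \<gamma>0) \<le> \<nu>" using h r0 by simp
  show "hstep g \<nu> \<theta> x \<gamma>0 \<ge> min hlo (\<nu> * \<theta> / (hhi * (max L 1)\<^sup>2))"
  proof (cases l0)
    case 0
    then show ?thesis using h hlo by simp
  next
    case (Suc m)
    have rm: "rratio g x (?b m) > \<nu>" using before Suc by auto
    have bm: "?b m > 0" using btrack_pos[OF th nu(1) g0, of m g x] before Suc by auto
    have rmM: "rratio g x (?b m) \<le> ?b m * M" using rM bm by auto
    have rpos: "rratio g x (?b m) > 0" using rm nu by simp
    have hb: "hstep g \<nu> \<theta> x \<gamma>0 = \<theta> * min (?b m) (?b m / rratio g x (?b m))"
      using h Suc bm th by (simp add: min_mult_distrib_left min_mult_distrib_right mult_ac)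
    have a1: "?b m \<ge> \<nu> / M" using rm rmM M by (simp add: divide_le_eq mult_ac)
    have a2: "?b m / rratio g x (?b m) \<ge> 1 / M" using rmM rpos M
      by (simp add: divide_le_eq le_divide_eq mult_ac)
    have a3: "1 / M \<ge> \<nu> / M" using nu M by (simp add: divide_right_mono)
    have "min (?b m) (?b m / rratio g x (?b m)) \<ge> \<nu> / M" using a1 a2 a3 by simp
    hence "\<theta> * (\<nu> / M) \<le> \<theta> * min (?b m) (?b m / rratio g x (?b m))" using th by (intro mult_left_mono) auto
    hence "hstep g \<nu> \<theta> x \<gamma>0 \<ge> \<theta> * (\<nu> / M)" using hb by simp
    moreover have "\<theta> * (\<nu> / M) \<ge> \<nu> * \<theta> / (hhi * M\<^sup>2)"
    proof -
      have "hhi * M\<^sup>2 \<ge> M" using M hhi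
        by (metis dual_order.trans le_square less_eq_real_def mult_le_cancel_right1 mult_left_le_one_le mult.commute power2_eq_square zero_le_one order.trans)
      hence "\<nu> * \<theta> / (hhi * M\<^sup>2) \<le> \<nu> * \<theta> / M" using M nu th
        by (intro divide_left_mono) auto
      thus ?thesis by (simp add: mult.commute)
    qed
    ultimately show ?thesis unfolding M_def by simp
  qed
qed

lemma descent:
  fixes g :: "'a::real_inner \<Rightarrow> 'a"
  assumes pc: "pseudo_monotone g" and xs: "g xs = 0" and gx: "g x \<noteq> 0"
    and h: "h > 0" and r: "rratio g x h \<le> \<nu>" and nu: "0 \<le> \<nu>"
    and beta: "0 \<le> \<beta>" "\<beta> \<le> 1"
  shows "(norm (x - h *\<^sub>R (g x - \<beta> *\<^sub>R (g x - g (x - h *\<^sub>R g x))) - xs))\<^sup>2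
     \<le> (norm (x - xs))\<^sup>2 - (2 * \<beta> - 1 - \<beta>\<^sup>2 * \<nu>\<^sup>2) * h\<^sup>2 * (norm (g x))\<^sup>2"
proof -
  define z where "z = x - h *\<^sub>R g x"
  define G where "G = g x"
  define Z where "Z = g z"
  define a where "a = x - xs"
  have zt: "ztrial g x h = z" unfolding z_def ztrial_def by simp
  have en: "norm (Z - G) \<le> \<nu> * norm G"
    using rratio_eq[of g x h] gx h r zt unfolding Z_def G_def
    by (simp add: divide_le_eq)
  hence en2: "(norm (Z - G))\<^sup>2 \<le> \<nu>\<^sup>2 * (norm G)\<^sup>2"
    by (metis norm_ge_zero power_mono power_mult_distrib)
  have pm: "\<And>y. g y \<bullet> (y - xs) \<ge> 0" using pc xs unfolding pseudo_monotone_def by auto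
  have P: "G \<bullet> a \<ge> 0" using pm[of x] unfolding G_def a_def .
  have Q0: "Z \<bullet> (a - h *\<^sub>R G) \<ge> 0" using pm[of z] unfolding Z_def a_def G_def z_def
    by (simp add: algebra_simps)
  hence Q: "Z \<bullet> a \<ge> h * (G \<bullet> Z)" by (simp add: inner_diff_right inner_commute)
  have lhs: "x - h *\<^sub>R (g x - \<beta> *\<^sub>R (g x - g (x - h *\<^sub>R g x))) - xs
      = a - h *\<^sub>R ((1 - \<beta>) *\<^sub>R G + \<beta> *\<^sub>R Z)"
    unfolding a_def G_def Z_def z_def by (simp add: algebra_simps)
  have id1: "(norm (a - h *\<^sub>R ((1 - \<beta>) *\<^sub>R G + \<beta> *\<^sub>R Z)))\<^sup>2
     = a \<bullet> a - 2 * (h * (1 - \<beta>) * (G \<bullet> a)) - 2 * (h * \<beta> * (Z \<bullet> a))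
       + h\<^sup>2 * ((1 - \<beta>)\<^sup>2 * (G \<bullet> G) + 2 * \<beta> * (1 - \<beta>) * (G \<bullet> Z) + \<beta>\<^sup>2 * (Z \<bullet> Z))"
  proof -
    define v where "v = (1 - \<beta>) *\<^sub>R G + \<beta> *\<^sub>R Z"
    have s1: "(norm (a - h *\<^sub>R v))\<^sup>2 = a \<bullet> a - 2 * h * (v \<bullet> a) + h\<^sup>2 * (v \<bullet> v)"
      unfolding power2_norm_eq_inner by (simp add: inner_diff_left inner_diff_right inner_commute power2_eq_square)
    have s2: "v \<bullet> a = (1 - \<beta>) * (G \<bullet> a) + \<beta> * (Z \<bullet> a)"
      unfolding v_def by (simp add: inner_add_left)
    have s3: "v \<bullet> v = (1 - \<beta>)\<^sup>2 * (G \<bullet> G) + 2 * \<beta> * (1 - \<beta>) * (G \<bullet> Z) + \<beta>\<^sup>2 * (Z \<bullet> Z)"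
      unfolding v_def by (simp add: inner_add_left inner_add_right inner_commute power2_eq_square algebra_simps)
    show ?thesis unfolding v_def[symmetric] s1 s2 s3 by (simp add: algebra_simps)
  qed
  have id2: "(norm (Z - G))\<^sup>2 = G \<bullet> G - 2 * (G \<bullet> Z) + Z \<bullet> Z"
    unfolding power2_norm_eq_inner by (simp add: inner_diff_left inner_diff_right inner_commute)
  have na: "(norm a)\<^sup>2 = a \<bullet> a" "(norm G)\<^sup>2 = G \<bullet> G" by (simp_all add: power2_norm_eq_inner)
  have e1: "h * (1 - \<beta>) * (G \<bullet> a) \<ge> 0" using h beta P by simp
  have e2: "h * \<beta> * (Z \<bullet> a) \<ge> h * \<beta> * (h * (G \<bullet> Z))"
    using Q h beta by (intro mult_left_mono) auto
  have e3: "h\<^sup>2 * \<beta>\<^sup>2 * (norm (Z - G))\<^sup>2 \<le> h\<^sup>2 * \<beta>\<^sup>2 * (\<nu>\<^sup>2 * (norm G)\<^sup>2)"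
    using en2 by (intro mult_left_mono) auto
  have alg: "- 2 * (h * \<beta> * (h * (G \<bullet> Z)))
      + h\<^sup>2 * ((1 - \<beta>)\<^sup>2 * (G \<bullet> G) + 2 * \<beta> * (1 - \<beta>) * (G \<bullet> Z) + \<beta>\<^sup>2 * (Z \<bullet> Z))
      = (1 - 2 * \<beta>) * h\<^sup>2 * (G \<bullet> G) + h\<^sup>2 * \<beta>\<^sup>2 * (G \<bullet> G - 2 * (G \<bullet> Z) + Z \<bullet> Z)"
    by (simp add: algebra_simps power2_eq_square)
  have alg2: "h\<^sup>2 * \<beta>\<^sup>2 * (\<nu>\<^sup>2 * (G \<bullet> G)) = \<beta>\<^sup>2 * \<nu>\<^sup>2 * h\<^sup>2 * (G \<bullet> G)" by simp
  have "(norm (x - h *\<^sub>R (g x - \<beta> *\<^sub>R (g x - g (x - h *\<^sub>R g x))) - xs))\<^sup>2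
     \<le> a \<bullet> a - (2 * \<beta> - 1 - \<beta>\<^sup>2 * \<nu>\<^sup>2) * h\<^sup>2 * (G \<bullet> G)"
    unfolding lhs id1 using e1 e2 e3 alg alg2 id2 na
    by (simp add: algebra_simps)
  thus ?thesis using na unfolding a_def G_def by simp
qed

lemma kappa_pos:
  fixes \<nu> \<beta> :: real
  assumes "0 < \<nu>" "\<nu> < 1" "(1 - sqrt (1 - \<nu>\<^sup>2)) / \<nu>\<^sup>2 < \<beta>" "\<beta> \<le> 1"
  shows "2 * \<beta> - 1 - \<beta>\<^sup>2 * \<nu>\<^sup>2 > 0"
proof -
  define s where "s = sqrt (1 - \<nu>\<^sup>2)"
  have n2: "0 < \<nu>\<^sup>2" "\<nu>\<^sup>2 < 1" using assms by (auto simp: power_less_one_iff)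
  have n3: "0 \<le> 1 - \<nu>\<^sup>2" using n2 by linarith
  have s2: "s\<^sup>2 = 1 - \<nu>\<^sup>2" unfolding s_def using real_sqrt_pow2[OF n3] .
  have s0: "s \<ge> 0" unfolding s_def using real_sqrt_ge_zero[OF n3] .
  have b1: "\<nu>\<^sup>2 * \<beta> > 1 - s" using assms(3) n2 unfolding s_def[symmetric]
    by (simp add: divide_less_eq mult.commute)
  have b2: "\<nu>\<^sup>2 * \<beta> < 1" using assms(4) n2
    by (metis dual_order.strict_trans2 mult_left_le mult_less_cancel_left_pos less_le_not_le not_less_iff_gr_or_eq n2(1))
  have "(1 - \<nu>\<^sup>2 * \<beta>)\<^sup>2 < s\<^sup>2"
    using b1 b2 s0 by (intro power_strict_mono) auto
  hence "\<nu>\<^sup>2 * (2 * \<beta> - 1 - \<beta>\<^sup>2 * \<nu>\<^sup>2) > 0"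
    unfolding s2 by (simp add: algebra_simps power2_eq_square)
  thus ?thesis using n2 by (simp add: zero_less_mult_iff)
qed

lemma proj_in: "hlo \<le> hhi \<Longrightarrow> hlo \<le> proj_interval hlo hhi t \<and> proj_interval hlo hhi t \<le> hhi"
  unfolding proj_interval_def by auto

theorem theorem4:
  fixes f :: "real ^ 'n \<Rightarrow> real" and g :: "real ^ 'n \<Rightarrow> real ^ 'n"
    and L \<mu> \<nu> \<theta> \<tau> \<beta> hlo hhi \<gamma>00 :: real and x0 :: "real ^ 'n"
  assumes grad: "\<And>x. GDERIV f x :> g x"
    and pc: "pseudo_monotone g"
    and lip: "L-lipschitz_on UNIV g"
    and nonempty: "{x. g x = 0} \<noteq> {}"
    and mu: "0 < \<mu>" "\<mu> < \<nu>" "\<nu> < 1"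
    and hb: "0 < hlo" "hlo < 1" "1 \<le> \<gamma>00" "\<gamma>00 \<le> hhi"
    and th: "0 < \<theta>" "\<theta> < 1"
    and tau: "\<tau> > 1"
    and beta: "(1 - sqrt (1 - \<nu>\<^sup>2)) / \<nu>\<^sup>2 < \<beta>" "\<beta> \<le> 1"
    and nz: "\<And>k. g (fst (alg2 g \<mu> \<nu> \<theta> \<tau> \<beta> hlo hhi x0 \<gamma>00 k)) \<noteq> 0"
    and xs: "g xs = 0"
    and K: "K \<ge> (1::nat)"
  shows "(1 / real K) * (\<Sum>k<K. (norm (g (fst (alg2 g \<mu> \<nu> \<theta> \<tau> \<beta> hlo hhi x0 \<gamma>00 k))))\<^sup>2)
     \<le> (norm (x0 - xs))\<^sup>2 /
        (real K * (2 * \<beta> - 1 - \<beta>\<^sup>2 * \<nu>\<^sup>2)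
          * (min hlo (\<nu> * \<theta> / (hhi * (max L 1)\<^sup>2)))\<^sup>2)"
proof -
  define X where "X k = fst (alg2 g \<mu> \<nu> \<theta> \<tau> \<beta> hlo hhi x0 \<gamma>00 k)" for k
  define \<Gamma> where "\<Gamma> k = snd (alg2 g \<mu> \<nu> \<theta> \<tau> \<beta> hlo hhi x0 \<gamma>00 k)" for k
  define H where "H k = hstep g \<nu> \<theta> (X k) (\<Gamma> k)" for k
  define \<kappa> where "\<kappa> = 2 * \<beta> - 1 - \<beta>\<^sup>2 * \<nu>\<^sup>2"
  define hm where "hm = min hlo (\<nu> * \<theta> / (hhi * (max L 1)\<^sup>2))"
  have nu0: "0 < \<nu>" using mu by simp
  have kp: "\<kappa> > 0" unfolding \<kappa>_def using kappa_pos[OF nu0 mu(3) beta] .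
  have b0: "0 \<le> \<beta>" using kp unfolding \<kappa>_def
    by (smt (verit) mult_nonneg_nonneg zero_le_power2)
  have hhi1: "1 \<le> hhi" using hb by simp
  have hm0: "hm > 0" unfolding hm_def using hb th nu0 hhi1
    by (simp add: max_def)
  have Xs: "X (Suc k) = X k - H k *\<^sub>R (g (X k) - \<beta> *\<^sub>R (g (X k) - g (X k - H k *\<^sub>R g (X k))))"
    and Gs: "\<Gamma> (Suc k) = (if rratio g (X k) (H k) \<le> \<mu> then proj_interval hlo hhi (\<tau> * H k)
                 else proj_interval hlo hhi (H k))" for k
    unfolding X_def \<Gamma>_def H_def
    by (cases "alg2 g \<mu> \<nu> \<theta> \<tau> \<beta> hlo hhi x0 \<gamma>00 k"; simp add: Let_def)+
  have inv: "hlo \<le> \<Gamma> k \<and> \<Gamma> k \<le> hhi" for k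
  proof (cases k)
    case 0 then show ?thesis using hb unfolding \<Gamma>_def by simp
  next
    case (Suc m) then show ?thesis using Gs[of m] proj_in[of hlo hhi] hb by auto
  qed
  have HP: "H k > 0" "rratio g (X k) (H k) \<le> \<nu>" "H k \<ge> hm" for k
    using hstep_props[OF nz[of k, folded X_def] lip th nu0 mu(3) hb(1) _ hhi1, of "\<Gamma> k"] inv[of k]
    unfolding H_def hm_def by auto
  have desc: "(norm (X (Suc k) - xs))\<^sup>2 \<le> (norm (X k - xs))\<^sup>2 - \<kappa> * hm\<^sup>2 * (norm (g (X k)))\<^sup>2" for k
  proof -
    have "(norm (X (Suc k) - xs))\<^sup>2 \<le> (norm (X k - xs))\<^sup>2 - \<kappa> * (H k)\<^sup>2 * (norm (g (X k)))\<^sup>2"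
      unfolding Xs \<kappa>_def
      using descent[OF pc xs nz[of k, folded X_def] HP(1) HP(2) less_imp_le[OF nu0] b0 beta(2)] .
    moreover have "hm\<^sup>2 \<le> (H k)\<^sup>2" using HP(3)[of k] hm0 by (intro power_mono) auto
    hence "\<kappa> * hm\<^sup>2 * (norm (g (X k)))\<^sup>2 \<le> \<kappa> * (H k)\<^sup>2 * (norm (g (X k)))\<^sup>2"
      using kp by (intro mult_right_mono mult_left_mono) auto
    ultimately show ?thesis by linarith
  qed
  have tele: "(norm (X N - xs))\<^sup>2 + \<kappa> * hm\<^sup>2 * (\<Sum>k<N. (norm (g (X k)))\<^sup>2) \<le> (norm (x0 - xs))\<^sup>2" for N
  proof (induction N)
    case 0 then show ?case unfolding X_def by simp
  next
    case (Suc N)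
    then show ?case using desc[of N] by (simp add: algebra_simps)
  qed
  define S where "S = (\<Sum>k<K. (norm (g (X k)))\<^sup>2)"
  have cS: "\<kappa> * hm\<^sup>2 * S \<le> (norm (x0 - xs))\<^sup>2" using tele[of K] unfolding S_def
    by (smt (verit) zero_le_power2)
  have Kp: "real K > 0" using K by simp
  have "(1 / real K) * S \<le> (norm (x0 - xs))\<^sup>2 / (real K * \<kappa> * hm\<^sup>2)"
    using cS Kp kp hm0 by (simp add: field_simps)
  thus ?thesis unfolding S_def X_def \<kappa>_def hm_def .
qed

end
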